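(* Let $K$ be a valued field and $d\ge1$. For any $d+2$ points $x_1,\dots,x_{d+2}\in K^d$ (not necessarily distinct), there is $i\in\{1,\dots,d+2\}$ such that $x_i\in\operatorname{conv}(\{x_j: j\ne i\})$.
   Context: $K$ is a field with a valuation $\nu:K\to\Gamma\cup\{\infty\}$ and valuation ring $\mathcal{O}=\{x:\nu(x)\ge 0\}$. For $Y\subseteq K^d$, $\operatorname{conv}(Y)=\{\sum_{i=1}^n\alpha_iy_i: n\ge1, y_i\in Y,\alpha_i\in\mathcal{O},\sum_i\alpha_i=1\}$ (the smallest convex set containing $Y$, where a set is convex if closed under all such combinations). *)

theory Defs
  imports "HOL-Analysis.Finite_Cartesian_Product"
begin

text \<open>A (Krull) valuation on a field K with values in an ordered abelian group
  \<Gamma> together with \<infinity>; the value \<infinity> is represented by None.\<close>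
definition valuation :: "('a::field \<Rightarrow> 'g::linordered_ab_group_add option) \<Rightarrow> bool" where
  "valuation \<nu> \<longleftrightarrow>
     (\<forall>x. \<nu> x = None \<longleftrightarrow> x = 0) \<and>
     (\<forall>x y. x \<noteq> 0 \<longrightarrow> y \<noteq> 0 \<longrightarrow> \<nu> (x * y) = Some (the (\<nu> x) + the (\<nu> y))) \<and>
     (\<forall>x y. x \<noteq> 0 \<longrightarrow> y \<noteq> 0 \<longrightarrow> x + y \<noteq> 0 \<longrightarrow>
        min (the (\<nu> x)) (the (\<nu> y)) \<le> the (\<nu> (x + y)))"

definition val_ring :: "('a::field \<Rightarrow> 'g::linordered_ab_group_add option) \<Rightarrow> 'a set" where
  "val_ring \<nu> = {x. \<nu> x = None \<or> (\<exists>g. \<nu> x = Some g \<and> 0 \<le> g)}"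

definition vconv :: "('a::field \<Rightarrow> 'g::linordered_ab_group_add option) \<Rightarrow> ('a^'n) set \<Rightarrow> ('a^'n) set" where
  "vconv \<nu> Y = {z. \<exists>n::nat. n \<ge> 1 \<and> (\<exists>y \<alpha>. (\<forall>i<n. y i \<in> Y \<and> \<alpha> i \<in> val_ring \<nu>) \<and>
        (\<Sum>i<n. \<alpha> i) = 1 \<and> z = (\<Sum>i<n. \<alpha> i *s y i))}"

end

theory Submission imports Defs "HOL-Analysis.Cartesian_Space" begin

lemma lin_dep:
  fixes v :: "nat \<Rightarrow> 'a::field^'n"
  assumes "inj_on v {..<CARD('n)+1}"
  shows "\<exists>c. (\<Sum>j<CARD('n)+1. c j *s v j) = 0 \<and> (\<exists>j<CARD('n)+1. c j \<noteq> 0)"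
proof -
  let ?S = "v ` {..<CARD('n)+1}"
  have cS: "card ?S = CARD('n)+1" using assms card_image by fastforce
  have "vec.dim ?S \<le> CARD('n)"
    by (metis vec.dim_subset subset_UNIV vec.dim_UNIV card_cart_basis)
  then have "vec.dependent ?S" using cS by (intro vec.dependent_biggerset_general) auto
  then obtain u where u: "\<exists>w\<in>?S. u w \<noteq> 0" "(\<Sum>w\<in>?S. u w *s w) = 0"
    using vec.dependent_finite[of ?S] by auto
  have "(\<Sum>j<CARD('n)+1. (u \<circ> v) j *s v j) = 0"
    using u(2) sum.reindex[OF assms, of "\<lambda>w. u w *s w"] by (simp add: o_def)
  moreover have "\<exists>j<CARD('n)+1. (u \<circ> v) j \<noteq> 0" using u(1) by auto
  ultimately show ?thesis by blast
qed

lemma val_one: assumes "valuation \<nu>" shows "\<nu> (1::'a::field) = Some (0::'g::linordered_ab_group_add)"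
  and "\<nu> (-1::'a) = Some (0::'g)"
proof -
  have m: "\<And>x y. x \<noteq> 0 \<Longrightarrow> y \<noteq> 0 \<Longrightarrow> \<nu> (x * y) = Some (the (\<nu> x) + the (\<nu> y))"
    using assms unfolding valuation_def by blast
  have n: "\<And>x. x\<noteq>0 \<Longrightarrow> \<nu> x = Some (the (\<nu> x))" using assms unfolding valuation_def by auto
  have h1: "\<nu> (1::'a) = Some (the (\<nu> 1) + the (\<nu> 1))" using m[of 1 1] by simp
  have h2: "\<nu> (1::'a) = Some (the (\<nu> 1))" using n[of 1] by simp
  have "Some (the (\<nu> (1::'a)) + the (\<nu> 1)) = Some (the (\<nu> 1))" by (rule trans[OF h1[symmetric] h2])
  then have "the (\<nu> (1::'a)) + the (\<nu> 1) = the (\<nu> 1)" by simp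
  then have a: "the (\<nu> (1::'a)) = 0" by simp
  then show "\<nu> (1::'a) = Some 0" using n[of 1] by simp
  have "\<nu> (1::'a) = Some (the (\<nu> (-1::'a)) + the (\<nu> (-1)))" using m[of "-1" "-1"] by simp
  then have "the (\<nu> (-1::'a)) + the (\<nu> (-1)) = 0" using a n[of 1] by simp
  then have "the (\<nu> (-1::'a)) = 0"
  proof -
    assume h: "the (\<nu> (-1::'a)) + the (\<nu> (-1)) = 0"
    show ?thesis
    proof (rule ccontr)
      assume "the (\<nu> (-1::'a)) \<noteq> 0"
      then consider "the (\<nu> (-1::'a)) < 0" | "the (\<nu> (-1::'a)) > 0" by fastforce
      then show False
      proof cases
        case 1 then show False using add_neg_neg[OF 1 1] h by simp
      next
        case 2 then show False using add_pos_pos[OF 2 2] h by simp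
      qed
    qed
  qed
  then show "\<nu> (-1::'a) = Some 0" using n[of "-1"] by simp
qed

lemma vconv_key:
  fixes \<nu> :: "'a::field \<Rightarrow> 'g::linordered_ab_group_add option"
    and x :: "nat \<Rightarrow> 'a^'n"
  assumes val: "valuation \<nu>" and N: "N \<ge> 2" and i: "i < N" and li: "l i \<noteq> 0"
    and sl: "(\<Sum>j<N. l j) = 0" and sx: "(\<Sum>j<N. l j *s x j) = 0"
    and mn: "\<And>j. j < N \<Longrightarrow> l j \<noteq> 0 \<Longrightarrow> the (\<nu> (l i)) \<le> the (\<nu> (l j))"
  shows "x i \<in> vconv \<nu> {x j | j. j < N \<and> j \<noteq> i}"
proof -
  have m: "\<And>x y. x \<noteq> 0 \<Longrightarrow> y \<noteq> 0 \<Longrightarrow> \<nu> (x * y) = Some (the (\<nu> x) + the (\<nu> y))"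
    using val unfolding valuation_def by blast
  have nn: "\<And>x. x\<noteq>0 \<Longrightarrow> \<nu> x = Some (the (\<nu> x))" using val unfolding valuation_def by auto
  have z: "\<nu> 0 = None" using val unfolding valuation_def by auto
  define j0 where "j0 = (if i = 0 then 1 else (0::nat))"
  have j0: "j0 < N" "j0 \<noteq> i" using N unfolding j0_def by auto
  define y where "y k = (if k = i then x j0 else x k)" for k
  define \<alpha> where "\<alpha> k = (if k = i then 0 else - l k / l i)" for k
  have Y: "\<forall>k<N. y k \<in> {x j | j. j < N \<and> j \<noteq> i}" using j0 unfolding y_def by auto
  have R: "\<alpha> k \<in> val_ring \<nu>" if "k < N" for k
  proof (cases "k = i \<or> l k = 0")
    case True then show ?thesis unfolding \<alpha>_def val_ring_def using z by auto
  next
    case False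
    then have lk: "l k \<noteq> 0" and ki: "k \<noteq> i" by auto
    let ?q = "- l k / l i"
    have q0: "?q \<noteq> 0" using lk li by simp
    have "\<nu> (?q * l i) = Some (the (\<nu> ?q) + the (\<nu> (l i)))" using m q0 li by blast
    moreover have "?q * l i = (-1) * l k" using li by simp
    moreover have "\<nu> ((-1) * l k) = Some (the (\<nu> (l k)))" using m[of "-1" "l k"] lk val_one(2)[OF val] by simp
    ultimately have "the (\<nu> ?q) + the (\<nu> (l i)) = the (\<nu> (l k))" by simp
    moreover have "the (\<nu> (l i)) \<le> the (\<nu> (l k))" using mn that lk by blast
    ultimately have "0 \<le> the (\<nu> ?q)" by (metis le_add_same_cancel2)
    then show ?thesis unfolding \<alpha>_def val_ring_def using ki nn[OF q0] by auto
  qed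
  have split: "\<And>f :: nat \<Rightarrow> 'b::comm_monoid_add. (\<Sum>k<N. f k) = f i + (\<Sum>k\<in>{..<N}-{i}. f k)"
    using i by (metis finite_lessThan lessThan_iff sum.remove)
  have "(\<Sum>k<N. \<alpha> k) = (\<Sum>k\<in>{..<N}-{i}. - l k / l i)"
    using split[of \<alpha>] unfolding \<alpha>_def by simp
  also have "\<dots> = - (\<Sum>k\<in>{..<N}-{i}. l k) / l i"
    by (simp add: sum_divide_distrib sum_negf)
  also have "(\<Sum>k\<in>{..<N}-{i}. l k) = - l i" using split[of l] sl by (simp add: eq_neg_iff_add_eq_0 add.commute)
  finally have S1: "(\<Sum>k<N. \<alpha> k) = 1" using li by simp
  have "(\<Sum>k<N. \<alpha> k *s y k) = (\<Sum>k\<in>{..<N}-{i}. (- l k / l i) *s x k)"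
    using split[of "\<lambda>k. \<alpha> k *s y k"] unfolding \<alpha>_def y_def by (auto intro!: sum.cong)
  also have "\<dots> = (- 1 / l i) *s (\<Sum>k\<in>{..<N}-{i}. l k *s x k)"
    by (simp add: vector_scalar_mult_def sum_distrib_left vec_eq_iff sum_component mult.assoc
        cong: sum.cong)
  also have "(\<Sum>k\<in>{..<N}-{i}. l k *s x k) = - (l i *s x i)"
    using split[of "\<lambda>k. l k *s x k"] sx by (simp add: eq_neg_iff_add_eq_0 add.commute)
  finally have S2: "(\<Sum>k<N. \<alpha> k *s y k) = x i" using li by (simp add: vec_eq_iff)
  show ?thesis unfolding vconv_def
    using N Y R S1 S2 by (intro CollectI exI[of _ N] conjI) (auto intro!: exI[of _ y] exI[of _ \<alpha>])
qed

theorem proposition2p7: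
  fixes \<nu> :: "'a::field \<Rightarrow> 'g::linordered_ab_group_add option"
    and x :: "nat \<Rightarrow> 'a^'n"
  assumes "valuation \<nu>"
  shows "\<exists>i<CARD('n) + 2. x i \<in> vconv \<nu> {x j | j. j < CARD('n) + 2 \<and> j \<noteq> i}"
proof -
  let ?N = "CARD('n) + 2"
  show ?thesis
  proof (cases "inj_on x {..<?N}")
    case False
    then obtain i j where ij: "i < ?N" "j < ?N" "i \<noteq> j" "x i = x j"
      unfolding inj_on_def by auto
    have "x i \<in> vconv \<nu> {x j | j. j < ?N \<and> j \<noteq> i}"
      unfolding vconv_def val_ring_def using ij val_one(1)[OF assms]
      by (intro CollectI exI[of _ 1] conjI)
        (auto intro!: exI[of _ "\<lambda>_. x j"] exI[of _ "\<lambda>_. 1::'a"])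
    then show ?thesis using ij by blast
  next
    case True
    define v where "v k = x (Suc k) - x 0" for k
    have "inj_on v {..<CARD('n)+1}"
      using True unfolding inj_on_def v_def by fastforce
    from lin_dep[OF this] obtain c where
      c: "(\<Sum>j<CARD('n)+1. c j *s v j) = 0" "\<exists>j<CARD('n)+1. c j \<noteq> 0" by blast
    define l where "l j = (if j = 0 then - (\<Sum>k<CARD('n)+1. c k) else c (j - 1))" for j
    have NS: "{..<?N} = {..<Suc (CARD('n)+1)}" by simp
    have sl: "(\<Sum>j<?N. l j) = 0"
      unfolding NS sum.lessThan_Suc_shift by (simp add: l_def)
    have e1: "(\<Sum>j<?N. l j *s x j) = l 0 *s x 0 + (\<Sum>k<CARD('n)+1. c k *s x (Suc k))"
      unfolding NS sum.lessThan_Suc_shift by (simp add: l_def)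
    have e2: "(\<Sum>j<CARD('n)+1. c j *s v j) = (\<Sum>k<CARD('n)+1. c k *s x (Suc k)) - (\<Sum>k<CARD('n)+1. c k) *s x 0"
      unfolding v_def vec.scale_right_diff_distrib sum_subtractf vec.scale_sum_left ..
    have "(\<Sum>j<?N. l j *s x j) = (\<Sum>j<CARD('n)+1. c j *s v j)"
      unfolding e1 e2 by (simp add: l_def vec.scale_minus_left del: sum.lessThan_Suc)
    with c have sx: "(\<Sum>j<?N. l j *s x j) = 0" by simp
    define M where "M = {the (\<nu> (l j)) | j. j < ?N \<and> l j \<noteq> 0}"
    have nz: "\<exists>j<?N. l j \<noteq> 0" 
    proof -
      from c(2) obtain j where "j < CARD('n)+1" "c j \<noteq> 0" by blast
      then show ?thesis by (intro exI[of _ "Suc j"]) (simp add: l_def)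
    qed
    have "finite M" unfolding M_def by auto
    moreover have "M \<noteq> {}" using nz unfolding M_def by auto
    ultimately have "Min M \<in> M" by simp
    then obtain i where i: "i < ?N" "l i \<noteq> 0" "the (\<nu> (l i)) = Min M" unfolding M_def by auto
    have mn: "\<And>j. j < ?N \<Longrightarrow> l j \<noteq> 0 \<Longrightarrow> the (\<nu> (l i)) \<le> the (\<nu> (l j))"
      using \<open>finite M\<close> i(3) unfolding M_def by (auto intro!: Min_le)
    show ?thesis using vconv_key[OF assms _ i(1) i(2) sl sx mn] i(1) by auto
  qed
qed

end
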